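(* Let $\mathcal{M}$ be a gridding matrix whose cell graph $G_\mathcal{M}$ is a tree containing no bumper-ended path. Then $G_\mathcal{M}$ contains a vertex $r$ such that for every vertex $q\ne r$, the path in $G_\mathcal{M}$ from $r$ to $q$, written $r=p_1,\dots,p_m=q$, does not end in a bumper, i.e., $(p_{m-1},q)$ is not a bumper.
   Context: A $k\times\ell$ gridding matrix $\mathcal{M}$ has permutation classes as entries ($i$ columns left to right, $j$ rows bottom to top). The cell graph $G_\mathcal{M}$ has as vertices the cells with infinite entries, adjacent when they share a row or column and all cells strictly between them are finite or empty; $\mathcal{M}_p$ denotes the entry at vertex $p$. For a permutation $\pi$ of length $n$ (diagram $\{(i,\pi_i)\}$), intervalicity of $A\subseteq[n]$ is the least number of disjoint integer intervals with union $A$, and grid-complexity of a point set is the maximum of the intervalicities of its two axis projections. The horizontal path-width of $\pi$ is the maximum over $i$ of the grid-complexity of $\{(1,\pi_1),\dots,(i,\pi_i)\}$; the vertical path-width is the maximum over $i$ of the grid-complexity of the set of points with values $1,\dots,i$. An ordered pair $(p,q)$ of vertices of $G_\mathcal{M}$ is a bumper if either $\mathcal{M}_q$ has unbounded horizontal path-width (over its members) and shares a column with $p$, or $\mathcal{M}_q$ has unbounded vertical path-width and shares a row with $p$. A bumper-ended path is a path $p_1,\dots,p_k$ in $G_\mathcal{M}$ with both $(p_2,p_1)$ and $(p_{k-1},p_k)$ bumpers. *)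

theory Defs
  imports Main
begin

text \<open>A permutation of length n is a list that is an arrangement of 1..n;
  its i-th entry (1-indexed) is pi_i = pi ! (i-1).\<close>
definition is_perm :: "nat list \<Rightarrow> bool" where
  "is_perm \<pi> \<longleftrightarrow> distinct \<pi> \<and> set \<pi> = {1..length \<pi>}"

definition contains :: "nat list \<Rightarrow> nat list \<Rightarrow> bool" where
  "contains \<pi> \<sigma> \<longleftrightarrow> (\<exists>is. length is = length \<sigma> \<and> sorted_wrt (<) is \<and>
      (\<forall>a<length is. is ! a < length \<pi>) \<and>
      (\<forall>a<length \<sigma>. \<forall>b<length \<sigma>. (\<sigma> ! a < \<sigma> ! b \<longleftrightarrow> \<pi> ! (is ! a) < \<pi> ! (is ! b))))"

definition perm_class :: "nat list set \<Rightarrow> bool" where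
  "perm_class C \<longleftrightarrow> (\<forall>\<pi>\<in>C. is_perm \<pi> \<and> (\<forall>\<sigma>. is_perm \<sigma> \<and> contains \<pi> \<sigma> \<longrightarrow> \<sigma> \<in> C))"

definition intervalicity :: "nat set \<Rightarrow> nat" where
  "intervalicity A = (LEAST k. \<exists>f :: nat \<Rightarrow> nat \<times> nat.
      (\<forall>a<k. fst (f a) \<le> snd (f a)) \<and>
      (\<forall>a<k. \<forall>b<k. a \<noteq> b \<longrightarrow> {fst (f a)..snd (f a)} \<inter> {fst (f b)..snd (f b)} = {}) \<and>
      A = (\<Union>a<k. {fst (f a)..snd (f a)}))"

definition grid_complexity :: "(nat \<times> nat) set \<Rightarrow> nat" where
  "grid_complexity P = max (intervalicity (fst ` P)) (intervalicity (snd ` P))"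

definition hprefix :: "nat list \<Rightarrow> nat \<Rightarrow> (nat \<times> nat) set" where
  "hprefix \<pi> i = {(Suc a, \<pi> ! a) | a. a < i \<and> a < length \<pi>}"

definition vprefix :: "nat list \<Rightarrow> nat \<Rightarrow> (nat \<times> nat) set" where
  "vprefix \<pi> i = {(Suc a, \<pi> ! a) | a. a < length \<pi> \<and> \<pi> ! a \<le> i}"

definition hpw :: "nat list \<Rightarrow> nat" where
  "hpw \<pi> = Max ({0} \<union> {grid_complexity (hprefix \<pi> i) | i. 1 \<le> i \<and> i \<le> length \<pi>})"

definition vpw :: "nat list \<Rightarrow> nat" where
  "vpw \<pi> = Max ({0} \<union> {grid_complexity (vprefix \<pi> i) | i. 1 \<le> i \<and> i \<le> length \<pi>})"

definition unbounded_hpw :: "nat list set \<Rightarrow> bool" where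
  "unbounded_hpw C \<longleftrightarrow> \<not> (\<exists>B. \<forall>\<pi>\<in>C. hpw \<pi> \<le> B)"

definition unbounded_vpw :: "nat list set \<Rightarrow> bool" where
  "unbounded_vpw C \<longleftrightarrow> \<not> (\<exists>B. \<forall>\<pi>\<in>C. vpw \<pi> \<le> B)"

text \<open>A k x l gridding matrix is M with entries M i j for columns i < k (left to right)
  and rows j < l (bottom to top), each a permutation class. Cells are pairs (i,j).\<close>
definition gridding_matrix :: "nat \<Rightarrow> nat \<Rightarrow> (nat \<Rightarrow> nat \<Rightarrow> nat list set) \<Rightarrow> bool" where
  "gridding_matrix k l M \<longleftrightarrow> (\<forall>i<k. \<forall>j<l. perm_class (M i j))"

definition cg_V :: "nat \<Rightarrow> nat \<Rightarrow> (nat \<Rightarrow> nat \<Rightarrow> nat list set) \<Rightarrow> (nat \<times> nat) set" where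
  "cg_V k l M = {(i, j). i < k \<and> j < l \<and> infinite (M i j)}"

definition cg_E :: "nat \<Rightarrow> nat \<Rightarrow> (nat \<Rightarrow> nat \<Rightarrow> nat list set) \<Rightarrow> nat \<times> nat \<Rightarrow> nat \<times> nat \<Rightarrow> bool" where
  "cg_E k l M p q \<longleftrightarrow> p \<in> cg_V k l M \<and> q \<in> cg_V k l M \<and> p \<noteq> q \<and>
     ((fst p = fst q \<and> (\<forall>j. min (snd p) (snd q) < j \<and> j < max (snd p) (snd q) \<longrightarrow> finite (M (fst p) j))) \<or>
      (snd p = snd q \<and> (\<forall>i. min (fst p) (fst q) < i \<and> i < max (fst p) (fst q) \<longrightarrow> finite (M i (snd p)))))"

definition is_path :: "'a set \<Rightarrow> ('a \<Rightarrow> 'a \<Rightarrow> bool) \<Rightarrow> 'a list \<Rightarrow> bool" where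
  "is_path V E ps \<longleftrightarrow> ps \<noteq> [] \<and> set ps \<subseteq> V \<and> distinct ps \<and>
     (\<forall>a. Suc a < length ps \<longrightarrow> E (ps ! a) (ps ! Suc a))"

definition is_cycle :: "'a set \<Rightarrow> ('a \<Rightarrow> 'a \<Rightarrow> bool) \<Rightarrow> 'a list \<Rightarrow> bool" where
  "is_cycle V E cs \<longleftrightarrow> length cs \<ge> 3 \<and> is_path V E cs \<and> E (last cs) (hd cs)"

definition is_tree :: "'a set \<Rightarrow> ('a \<Rightarrow> 'a \<Rightarrow> bool) \<Rightarrow> bool" where
  "is_tree V E \<longleftrightarrow> V \<noteq> {} \<and>
     (\<forall>u\<in>V. \<forall>v\<in>V. \<exists>ps. is_path V E ps \<and> hd ps = u \<and> last ps = v) \<and>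
     \<not> (\<exists>cs. is_cycle V E cs)"

definition bumper :: "nat \<Rightarrow> nat \<Rightarrow> (nat \<Rightarrow> nat \<Rightarrow> nat list set) \<Rightarrow> nat \<times> nat \<Rightarrow> nat \<times> nat \<Rightarrow> bool" where
  "bumper k l M p q \<longleftrightarrow> p \<in> cg_V k l M \<and> q \<in> cg_V k l M \<and>
     ((unbounded_hpw (M (fst q) (snd q)) \<and> fst p = fst q) \<or>
      (unbounded_vpw (M (fst q) (snd q)) \<and> snd p = snd q))"

definition bumper_ended_path :: "nat \<Rightarrow> nat \<Rightarrow> (nat \<Rightarrow> nat \<Rightarrow> nat list set) \<Rightarrow> (nat \<times> nat) list \<Rightarrow> bool" where
  "bumper_ended_path k l M ps \<longleftrightarrow> is_path (cg_V k l M) (cg_E k l M) ps \<and> length ps \<ge> 2 \<and>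
     bumper k l M (ps ! 1) (ps ! 0) \<and>
     bumper k l M (ps ! (length ps - 2)) (ps ! (length ps - 1))"

end

theory Submission
  imports Defs
begin

lemma is_path_alt: "is_path V E ps \<longleftrightarrow> ps \<noteq> [] \<and> set ps \<subseteq> V \<and> distinct ps \<and> successively E ps"
  unfolding is_path_def successively_conv_nth by blast

lemma distinct_hd_last: "distinct zs \<Longrightarrow> zs \<noteq> [] \<Longrightarrow> hd zs = last zs \<Longrightarrow> zs = [hd zs]"
  by (cases zs) (auto split: if_splits)

lemma split3: "length zs \<ge> 2 \<Longrightarrow> zs = hd zs # butlast (tl zs) @ [last zs]"
  by (cases zs; cases "tl zs") auto

lemma path_unique:
  assumes sym: "\<And>x y. E x y \<Longrightarrow> E y x" and nc: "\<not>(\<exists>cs. is_cycle V E cs)"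
  shows "is_path V E xs \<Longrightarrow> is_path V E ys \<Longrightarrow> hd xs = hd ys \<Longrightarrow> last xs = last ys \<Longrightarrow> xs = ys"
proof (induction "length xs + length ys" arbitrary: xs ys rule: less_induct)
  case less
  note px = less.prems(1)[unfolded is_path_alt] and py = less.prems(2)[unfolded is_path_alt]
  show ?case
  proof (cases "length xs \<ge> 2 \<and> length ys \<ge> 2")
    case False
    then have "\<not> 2 \<le> length xs \<or> \<not> 2 \<le> length ys" by auto
    then show ?thesis
    proof
      assume "\<not> 2 \<le> length xs"
      then have "xs = [hd xs]" using px by (cases xs; cases "tl xs") auto
      then have "ys = [hd ys]" using py less.prems(3,4) distinct_hd_last
        by (metis last_ConsL)
      then show ?thesis using \<open>xs = [hd xs]\<close> less.prems(3) by metis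
    next
      assume "\<not> 2 \<le> length ys"
      then have "ys = [hd ys]" using py by (cases ys; cases "tl ys") auto
      then have "xs = [hd xs]" using px less.prems(3,4) distinct_hd_last
        by (metis last_ConsL)
      then show ?thesis using \<open>ys = [hd ys]\<close> less.prems(3) by metis
    qed
  next
    case True
    then have L: "length xs \<ge> 2" "length ys \<ge> 2" by auto
    show ?thesis
    proof (cases "\<exists>w. w \<in> set xs \<and> w \<in> set ys \<and> w \<noteq> hd xs \<and> w \<noteq> last xs")
      case True
      then obtain w where w: "w \<in> set xs" "w \<in> set ys" "w \<noteq> hd xs" "w \<noteq> last xs" by blast
      obtain xa xb where xs: "xs = xa @ w # xb" using w(1) split_list by metis
      obtain ya yb where ys: "ys = ya @ w # yb" using w(2) split_list by metis
      have ne: "xa \<noteq> []" "xb \<noteq> []" "ya \<noteq> []" "yb \<noteq> []"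
        using w xs ys less.prems(3,4) by auto
      have p1: "is_path V E (xa @ [w])" "is_path V E (ya @ [w])"
        "is_path V E (w # xb)" "is_path V E (w # yb)"
        using px py xs ys ne unfolding is_path_alt
        by (auto simp: successively_append_iff)
      have e1: "xa @ [w] = ya @ [w]"
        apply (rule less.hyps[OF _ p1(1,2)])
        using xs ys ne less.prems(3) by auto
      have e2: "w # xb = w # yb"
        apply (rule less.hyps[OF _ p1(3,4)])
        using xs ys ne less.prems(4) by auto
      show ?thesis using e1 e2 xs ys by simp
    next
      case False
      show ?thesis
      proof (rule ccontr)
        assume neq: "xs \<noteq> ys"
        define m where "m = butlast (tl ys)"
        have ys: "ys = hd xs # m @ [last xs]" using split3[OF L(2)] less.prems(3,4) m_def by metis
        have xs: "xs = hd xs # butlast (tl xs) @ [last xs]" using split3[OF L(1)] .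
        have dm: "set m \<inter> set xs = {}" using False py ys by (auto)
        define cs where "cs = xs @ rev m"
        have sy: "successively E (hd xs # m @ [last xs])" using py ys by (metis)
        have dmm: "distinct (hd xs # m @ [last xs])" using py ys by (metis)
        then have dmm: "distinct m" by simp
        have sm1: "successively E m" using sy by (simp add: successively_append_iff successively_Cons)
        have sm2: "m \<noteq> [] \<Longrightarrow> E (hd xs) (hd m)" using sy by (simp add: successively_Cons)
        have sm3: "m \<noteq> [] \<Longrightarrow> E (last m) (last xs)" using sy successively_append_iff[of E "hd xs # m" "[last xs]"] by simp
        have sm4: "m = [] \<Longrightarrow> E (hd xs) (last xs)" using sy by simp
        have smr: "successively E (rev m)"
        proof -
          have "successively (\<lambda>x y. E y x) m"
            by (rule successively_mono[OF sm1]) (erule sym)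
          then show ?thesis by simp
        qed
        have len: "length cs \<ge> 3"
        proof (cases "length xs = 2 \<and> m = []")
          case True
          then have "xs = [hd xs, last xs]" 
          proof -
            have "length (butlast (tl xs)) = 0" using True by simp
            then have "butlast (tl xs) = []" by blast
            then show ?thesis using xs by (metis append_Nil)
          qed
          note xa = this
          have ya: "ys = [hd xs, last xs]" using ys True by simp
          have "ys = xs" using HOL.trans[OF ya HOL.sym[OF xa]] .
          then show ?thesis using neq by simp
        next
          case False
          then show ?thesis using L(1) unfolding cs_def by (cases m) auto
        qed
        have sm3': "m \<noteq> [] \<Longrightarrow> E (last xs) (last m)" using sm3 by (rule sym)
        have xne: "xs \<noteq> []" using px by blast
        have "set ys \<subseteq> V" using py by blast
        then have "set m \<subseteq> V" using ys by auto
        have "is_path V E cs"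
          unfolding is_path_alt cs_def
          using px \<open>set m \<subseteq> V\<close> dm dmm smr sm3' xne by (auto simp: successively_append_iff hd_rev)
        moreover have "E (last cs) (hd cs)"
        proof (cases "m = []")
          case True
          then show ?thesis using sym[OF sm4[OF True]] xne by (simp add: cs_def)
        next
          case False
          then show ?thesis using sym[OF sm2[OF False]] xne by (simp add: cs_def last_rev)
        qed
        ultimately have "is_cycle V E cs" using len unfolding is_cycle_def by blast
        then show False using nc by blast
      qed
    qed
  qed
qed


lemma nth_len2: "length xs \<ge> 2 \<Longrightarrow> xs!(length xs - 2) = last (butlast xs)"
  proof (cases xs rule: rev_cases)
  case (snoc ys y)
  assume "length xs \<ge> 2"
  then have "ys \<noteq> []" using snoc by auto
  then show ?thesis using snoc by (simp add: nth_append last_conv_nth)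
qed simp

lemma path_len2: "is_path V E ps \<Longrightarrow> hd ps \<noteq> last ps \<Longrightarrow> length ps \<ge> 2"
  unfolding is_path_def by (cases ps; cases "tl ps") auto

lemma key:
  assumes sym: "\<And>x y. E x y \<Longrightarrow> E y x" and nc: "\<not>(\<exists>cs. is_cycle V E cs)"
    and nb: "\<not> (\<exists>ps. is_path V E ps \<and> length ps \<ge> 2 \<and> B (ps!1) (ps!0) \<and> B (ps!(length ps - 2)) (ps!(length ps - 1)))"
    and rs: "is_path V E rs" "hd rs = r" "last rs = q" "q \<noteq> r" "B (rs!(length rs - 2)) q"
    and qs: "is_path V E qs" "hd qs = q" "last qs = q'" "q' \<noteq> q" "B (qs!(length qs - 2)) q'"
  shows "\<exists>ps. is_path V E ps \<and> hd ps = r \<and> last ps = q' \<and> q' \<noteq> r \<and> B (ps!(length ps - 2)) q'"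
proof -
  define p where "p = rs!(length rs - 2)"
  have lr: "length rs \<ge> 2" using path_len2[OF rs(1)] rs(2-4) by auto
  have lq: "length qs \<ge> 2" using path_len2[OF qs(1)] qs(2-4) by auto
  have pr: "rs \<noteq> []" "set rs \<subseteq> V" "distinct rs" "successively E rs" using rs(1) unfolding is_path_alt by auto
  have pq: "qs \<noteq> []" "set qs \<subseteq> V" "distinct qs" "successively E qs" using qs(1) unfolding is_path_alt by auto
  have p_eq: "p = last (butlast rs)" using nth_len2[OF lr] p_def by simp
  have q1: "qs!1 \<noteq> p"
  proof
    assume "qs!1 = p"
    then have "B (qs!1) (qs!0)" using rs(5) p_def qs(2) pq(1) by (simp add: hd_conv_nth)
    moreover have "qs!(length qs - 1) = q'" using qs(3) pq(1) by (simp add: last_conv_nth)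
    ultimately show False using nb qs(1) lq qs(5) by metis
  qed
  have disj: "set rs \<inter> set (tl qs) = {}"
  proof (rule ccontr)
    assume "set rs \<inter> set (tl qs) \<noteq> {}"
    then obtain y where y: "y \<in> set rs" "y \<in> set (tl qs)" by blast
    obtain r1 r2 where rsp: "rs = r1 @ y # r2" using split_list[OF y(1)] by blast
    obtain q1 q2 where qtp: "tl qs = q1 @ y # q2" using split_list[OF y(2)] by blast
    have qsp: "qs = q # q1 @ y # q2" using qtp qs(2) pq(1) by (metis list.collapse)
    have yq: "y \<noteq> q" using pq(3) qsp by auto
    have r2: "r2 \<noteq> []" using rs(3) yq rsp by auto
    have pA: "is_path V E (y # r2)" using pr rsp unfolding is_path_alt
      by (auto simp: successively_append_iff)
    have pB0: "successively E (q # q1 @ [y])" using pq(4) qsp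
      successively_append_iff[of E "q # q1 @ [y]" q2] by simp
    have "successively (\<lambda>x y. E y x) (q # q1 @ [y])"
      by (rule successively_mono[OF pB0]) (erule sym)
    then have "successively E (rev (q # q1 @ [y]))" by (simp only: successively_rev)
    moreover have "distinct (q # q1 @ [y])" "set (q # q1 @ [y]) \<subseteq> V" using pq(2,3) qsp by auto
    ultimately have pB: "is_path V E (rev (q # q1 @ [y]))" unfolding is_path_alt by auto
    have "y # r2 = rev (q # q1 @ [y])"
      by (rule path_unique[OF sym nc pA pB]) (use rs(3) rsp r2 in auto)
    then have "last (butlast (y # r2)) = last (butlast (rev (q # q1 @ [y])))" by simp
    moreover have "last (butlast (y # r2)) = p" using p_eq rsp r2 by (simp add: butlast_append)
    moreover have "last (butlast (rev (q # q1 @ [y]))) = qs!1" using qsp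
      by (cases q1) (auto simp: butlast_append)
    ultimately show False using q1 by simp
  qed
  define ps where "ps = butlast rs @ qs"
  have brs: "butlast rs \<noteq> []" using lr by (cases rs rule: rev_cases) auto
  have rsb: "rs = butlast rs @ [q]" using rs(3) pr(1) append_butlast_last_id by metis
  have qnb: "q \<notin> set (butlast rs)" using pr(3) rsb by (metis distinct_append disjoint_iff list.set_intros(1))
  have qsc: "qs = q # tl qs" using qs(2) pq(1) list.collapse by metis
  have dj2: "set (butlast rs) \<inter> set qs = {}"
    using disj qnb qsc in_set_butlastD by (metis Int_iff disjoint_iff set_ConsD)
  have "successively E (butlast rs @ [q])" using pr(4) rsb by simp
  then have sb: "successively E (butlast rs)" "E (last (butlast rs)) q"
    using brs by (auto simp: successively_append_iff)
  have s1: "set (butlast rs) \<subseteq> V" using pr(2) in_set_butlastD by fast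
  have s2: "distinct (butlast rs)" using pr(3) distinct_butlast by fast
  have s3: "successively E ps" unfolding ps_def successively_append_iff
    using sb pq(4) qs(2) by simp
  have pp: "is_path V E ps" unfolding is_path_alt ps_def
    using s3[unfolded ps_def] pq(1-3) s1 s2 dj2 by simp
  have hp: "hd ps = r" using brs rs(2) rsb unfolding ps_def by (metis hd_append2)
  have lp: "last ps = q'" using qs(3) pq(1) unfolding ps_def by simp
  have np: "ps!(length ps - 2) = qs!(length qs - 2)" unfolding ps_def using lq lr
    by (auto simp: nth_append intro!: arg_cong[where f="(!) qs"])
  have rr: "r \<in> set (butlast rs)" using hp brs hd_in_set[OF brs] unfolding ps_def by (simp add: hd_append)
  have "q' \<in> set qs" using qs(3) pq(1) by auto
  then have "q' \<noteq> r" using rr dj2 by blast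
  then show ?thesis using pp hp lp np qs(5) by metis
qed


lemma cg_E_sym: "cg_E k l M x y \<Longrightarrow> cg_E k l M y x"
  unfolding cg_E_def by (auto simp: min.commute max.commute)

lemma cg_V_finite: "finite (cg_V k l M)"
proof -
  have "cg_V k l M \<subseteq> {..<k} \<times> {..<l}" unfolding cg_V_def by auto
  then show ?thesis by (rule finite_subset) auto
qed

theorem mainTheorem14:
  fixes k l :: nat and M :: "nat \<Rightarrow> nat \<Rightarrow> nat list set"
  assumes "gridding_matrix k l M"
    and "is_tree (cg_V k l M) (cg_E k l M)"
    and "\<not> (\<exists>ps. bumper_ended_path k l M ps)"
  shows "\<exists>r\<in>cg_V k l M. \<forall>q\<in>cg_V k l M. q \<noteq> r \<longrightarrow>
           (\<forall>ps. is_path (cg_V k l M) (cg_E k l M) ps \<and> hd ps = r \<and> last ps = q \<longrightarrow>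
              \<not> bumper k l M (ps ! (length ps - 2)) q)"
proof -
  define V where "V = cg_V k l M"
  define E where "E = cg_E k l M"
  define B where "B = bumper k l M"
  have sym: "\<And>x y. E x y \<Longrightarrow> E y x" unfolding E_def by (rule cg_E_sym)
  have nc: "\<not>(\<exists>cs. is_cycle V E cs)" and ne: "V \<noteq> {}"
    using assms(2) unfolding is_tree_def V_def E_def by auto
  have nb: "\<not> (\<exists>ps. is_path V E ps \<and> length ps \<ge> 2 \<and> B (ps!1) (ps!0) \<and> B (ps!(length ps - 2)) (ps!(length ps - 1)))"
    using assms(3) unfolding bumper_ended_path_def V_def E_def B_def by blast
  define Viol where "Viol r = {q \<in> V. q \<noteq> r \<and> (\<exists>ps. is_path V E ps \<and> hd ps = r \<and> last ps = q \<and> B (ps!(length ps - 2)) q)}" for r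
  have fin: "finite (Viol r)" for r
    using cg_V_finite[of k l M] unfolding Viol_def V_def by auto
  obtain r0 where "r0 \<in> V" using ne by blast
  then obtain r where r: "r \<in> V" "\<And>y. y \<in> V \<Longrightarrow> card (Viol r) \<le> card (Viol y)"
    using ex_has_least_nat[of "\<lambda>r. r \<in> V" r0 "\<lambda>r. card (Viol r)"] by blast
  have empty: "Viol r = {}"
  proof (rule ccontr)
    assume "Viol r \<noteq> {}"
    then obtain q where q: "q \<in> Viol r" by blast
    then obtain rs where rs: "is_path V E rs" "hd rs = r" "last rs = q" "q \<noteq> r" "B (rs!(length rs - 2)) q"
      and qV: "q \<in> V" unfolding Viol_def by blast
    have "Viol q \<subseteq> Viol r - {q}"
    proof
      fix q' assume "q' \<in> Viol q"
      then obtain qs where qs: "is_path V E qs" "hd qs = q" "last qs = q'" "q' \<noteq> q" "B (qs!(length qs - 2)) q'"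
        and q'V: "q' \<in> V" unfolding Viol_def by blast
      from key[OF sym nc nb rs qs] show "q' \<in> Viol r - {q}"
        using q'V qs(4) unfolding Viol_def by blast
    qed
    moreover have "q \<in> Viol r" by (rule q)
    ultimately have "Viol q \<subset> Viol r" by blast
    then have "card (Viol q) < card (Viol r)" using fin by (rule psubset_card_mono[rotated])
    then show False using r(2)[OF qV] by simp
  qed
  show ?thesis
  proof (rule bexI[OF _ r(1)[unfolded V_def]], intro ballI impI allI)
    fix q ps
    assume "q \<in> cg_V k l M" "q \<noteq> r"
      "is_path (cg_V k l M) (cg_E k l M) ps \<and> hd ps = r \<and> last ps = q"
    then show "\<not> bumper k l M (ps ! (length ps - 2)) q"
      using empty unfolding Viol_def V_def E_def B_def by blast
  qed
qed

end
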